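(* Let $n\le m$ and $0<\rho<n$. Then $$\left\lfloor\frac{q^{mn}}{V_\rho(q^m,n)}\right\rfloor+1\le K_{\mathrm R}(q^m,n,\rho)\le q^{m(n-\rho)}.$$
   Context: The rank $\mathrm{rk}(\mathbf x)$ of $\mathbf x\in\mathrm{GF}(q^m)^n$ is the maximum number of its coordinates linearly independent over $\mathrm{GF}(q)$, and $d_{\mathrm R}(\mathbf x,\mathbf y)=\mathrm{rk}(\mathbf x-\mathbf y)$. The rank covering radius of $C\subseteq\mathrm{GF}(q^m)^n$ is $\max_{\mathbf x}\min_{\mathbf c\in C}d_{\mathrm R}(\mathbf x,\mathbf c)$, and $K_{\mathrm R}(q^m,n,\rho)$ is the minimum cardinality of a code in $\mathrm{GF}(q^m)^n$ with rank covering radius $\rho$. $V_\rho(q^m,n)=\sum_{u=0}^\rho {n\brack u}\alpha(m,u)$ is the volume of a ball of rank radius $\rho$, where $\alpha(m,0)=1$, $\alpha(m,u)=\prod_{i=0}^{u-1}(q^m-q^i)$ and ${n\brack u}=\alpha(n,u)/\alpha(u,u)$. *)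

theory Defs
  imports Complex_Main
begin

text \<open>GF(q^m) is modelled by a finite field type 'a; GF(q) by a subfield K of it.\<close>

definition is_subfield :: "'a::field set \<Rightarrow> bool" where
  "is_subfield K \<longleftrightarrow> 0 \<in> K \<and> 1 \<in> K \<and>
     (\<forall>a\<in>K. \<forall>b\<in>K. a + b \<in> K \<and> a * b \<in> K) \<and>
     (\<forall>a\<in>K. - a \<in> K) \<and> (\<forall>a\<in>K. a \<noteq> 0 \<longrightarrow> inverse a \<in> K)"

text \<open>Vectors of GF(q^m)^n: functions nat => 'a vanishing outside {0..<n}.\<close>
definition vecs :: "nat \<Rightarrow> (nat \<Rightarrow> 'a::zero) set" where
  "vecs n = {x. \<forall>i\<ge>n. x i = 0}"

definition lin_indep_over :: "'a::field set \<Rightarrow> (nat \<Rightarrow> 'a) \<Rightarrow> nat set \<Rightarrow> bool" where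
  "lin_indep_over K x S \<longleftrightarrow>
     (\<forall>c. (\<forall>i\<in>S. c i \<in> K) \<longrightarrow> (\<Sum>i\<in>S. c i * x i) = 0 \<longrightarrow> (\<forall>i\<in>S. c i = 0))"

definition rk :: "'a::field set \<Rightarrow> nat \<Rightarrow> (nat \<Rightarrow> 'a) \<Rightarrow> nat" where
  "rk K n x = Max {card S | S. S \<subseteq> {0..<n} \<and> lin_indep_over K x S}"

definition rank_dist :: "'a::field set \<Rightarrow> nat \<Rightarrow> (nat \<Rightarrow> 'a) \<Rightarrow> (nat \<Rightarrow> 'a) \<Rightarrow> nat" where
  "rank_dist K n x y = rk K n (\<lambda>i. x i - y i)"

definition rank_cov_radius :: "'a::field set \<Rightarrow> nat \<Rightarrow> (nat \<Rightarrow> 'a) set \<Rightarrow> nat" where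
  "rank_cov_radius K n C = Max ((\<lambda>x. Min (rank_dist K n x ` C)) ` vecs n)"

definition K_R :: "'a::field set \<Rightarrow> nat \<Rightarrow> nat \<Rightarrow> nat" where
  "K_R K n \<rho> = Inf {card C | C. C \<subseteq> vecs n \<and> C \<noteq> {} \<and> rank_cov_radius K n C = \<rho>}"

definition alpha :: "nat \<Rightarrow> nat \<Rightarrow> nat \<Rightarrow> real" where
  "alpha q m u = (\<Prod>i<u. real q ^ m - real q ^ i)"

definition gauss_binom :: "nat \<Rightarrow> nat \<Rightarrow> nat \<Rightarrow> real" where
  "gauss_binom q n u = alpha q n u / alpha q u u"

definition ball_vol :: "nat \<Rightarrow> nat \<Rightarrow> nat \<Rightarrow> nat \<Rightarrow> real" where
  "ball_vol q m n \<rho> = (\<Sum>u = 0..\<rho>. gauss_binom q n u * alpha q m u)"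

end

theory Submission
  imports Defs "HOL-Library.FuncSet"
begin
definition spn :: "'a::field set \<Rightarrow> (nat \<Rightarrow> 'a) \<Rightarrow> nat set \<Rightarrow> 'a set" where
  "spn K x S = {(\<Sum>i\<in>S. c i * x i) | c. \<forall>i\<in>S. c i \<in> K}"

definition subsp :: "'a::field set \<Rightarrow> 'a set \<Rightarrow> bool" where
  "subsp K V \<longleftrightarrow> 0 \<in> V \<and> (\<forall>a\<in>V. \<forall>b\<in>V. a + b \<in> V) \<and> (\<forall>k\<in>K. \<forall>a\<in>V. k * a \<in> V)"

lemma spnI: "\<forall>i\<in>S. c i \<in> K \<Longrightarrow> a = (\<Sum>i\<in>S. c i * x i) \<Longrightarrow> a \<in> spn K x S"
  unfolding spn_def by auto

lemma sf_0: "is_subfield K \<Longrightarrow> 0 \<in> K" by (simp add: is_subfield_def)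
lemma sf_1: "is_subfield K \<Longrightarrow> 1 \<in> K" by (simp add: is_subfield_def)
lemma sf_add: "is_subfield K \<Longrightarrow> a \<in> K \<Longrightarrow> b \<in> K \<Longrightarrow> a + b \<in> K" by (simp add: is_subfield_def)
lemma sf_mult: "is_subfield K \<Longrightarrow> a \<in> K \<Longrightarrow> b \<in> K \<Longrightarrow> a * b \<in> K" by (simp add: is_subfield_def)
lemma sf_uminus: "is_subfield K \<Longrightarrow> a \<in> K \<Longrightarrow> - a \<in> K" by (simp add: is_subfield_def)
lemma sf_inverse: "is_subfield K \<Longrightarrow> a \<in> K \<Longrightarrow> inverse a \<in> K"
  by (cases "a = 0") (auto simp add: is_subfield_def)
lemma sf_diff: "is_subfield K \<Longrightarrow> a \<in> K \<Longrightarrow> b \<in> K \<Longrightarrow> a - b \<in> K"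
  using sf_add[of K a "- b"] sf_uminus[of K b] by simp
lemma sf_div: "is_subfield K \<Longrightarrow> a \<in> K \<Longrightarrow> b \<in> K \<Longrightarrow> a / b \<in> K"
  using sf_mult[of K a "inverse b"] sf_inverse[of K b] by (simp add: divide_inverse)

lemma subsp_sum:
  assumes "subsp K V" "finite A" "\<And>i. i \<in> A \<Longrightarrow> f i \<in> V"
  shows "sum f A \<in> V"
  using assms(2,3)
proof (induction A rule: finite_induct)
  case empty then show ?case using assms(1) by (simp add: subsp_def)
next
  case (insert a A) then show ?case using assms(1) by (simp add: subsp_def)
qed

lemma spn_subsp:
  assumes K: "is_subfield K" and fin: "finite S"
  shows "subsp K (spn K x S)"
  unfolding subsp_def
proof (intro conjI ballI)
  show "0 \<in> spn K x S" unfolding spn_def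
    by (rule CollectI, rule exI[of _ "\<lambda>_. 0"]) (simp add: sf_0[OF K])
next
  fix a b assume "a \<in> spn K x S" "b \<in> spn K x S"
  then obtain c d where a: "a = (\<Sum>i\<in>S. c i * x i)" "\<forall>i\<in>S. c i \<in> K"
    and b: "b = (\<Sum>i\<in>S. d i * x i)" "\<forall>i\<in>S. d i \<in> K" unfolding spn_def by blast
  have "a + b = (\<Sum>i\<in>S. (c i + d i) * x i)" using a b by (simp add: sum.distrib distrib_right)
  moreover have "\<forall>i\<in>S. c i + d i \<in> K" using a b sf_add[OF K] by blast
  ultimately show "a + b \<in> spn K x S" by (intro spnI[of S "\<lambda>i. c i + d i"])
next
  fix k a assume k: "k \<in> K" and "a \<in> spn K x S"
  then obtain c where a: "a = (\<Sum>i\<in>S. c i * x i)" "\<forall>i\<in>S. c i \<in> K" unfolding spn_def by blast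
  have "k * a = (\<Sum>i\<in>S. (k * c i) * x i)" using a by (simp add: sum_distrib_left mult.assoc)
  moreover have "\<forall>i\<in>S. k * c i \<in> K" using a k sf_mult[OF K] by blast
  ultimately show "k * a \<in> spn K x S" by (intro spnI[of S "\<lambda>i. k * c i"])
qed

lemma spn_gen:
  assumes K: "is_subfield K" and fin: "finite S" and i: "i \<in> S"
  shows "x i \<in> spn K x S"
proof -
  have e: "(\<lambda>j. (if j = i then 1 else 0) * x j) = (\<lambda>j. if j = i then x j else 0)" by auto
  have "(\<Sum>j\<in>S. (if j = i then 1 else 0) * x j) = x i"
    using fin i by (simp only: e sum.delta) simp
  moreover have "\<forall>j\<in>S. (if j = i then 1 else 0) \<in> K" using sf_0[OF K] sf_1[OF K] by simp
  ultimately show ?thesis by (intro spnI[of S "\<lambda>j. if j = i then 1 else 0"]) auto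
qed

lemma spn_least:
  assumes K: "is_subfield K" and fin: "finite S" and V: "subsp K V" and g: "\<And>i. i \<in> S \<Longrightarrow> x i \<in> V"
  shows "spn K x S \<subseteq> V"
proof
  fix a assume "a \<in> spn K x S"
  then obtain c where a: "a = (\<Sum>i\<in>S. c i * x i)" "\<forall>i\<in>S. c i \<in> K" unfolding spn_def by blast
  show "a \<in> V" unfolding a(1)
    by (rule subsp_sum[OF V fin]) (use V a g in \<open>auto simp: subsp_def\<close>)
qed

lemma spn_mono:
  assumes K: "is_subfield K" and fin: "finite T" and "S \<subseteq> T"
  shows "spn K x S \<subseteq> spn K x T"
proof (rule spn_least[OF K])
  show "finite S" using assms finite_subset by blast
  show "subsp K (spn K x T)" by (rule spn_subsp[OF K fin])
  show "\<And>i. i \<in> S \<Longrightarrow> x i \<in> spn K x T" using spn_gen[OF K fin] assms(3) by blast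
qed

lemma lin_indep_nonzero:
  assumes K: "is_subfield K" and fin: "finite S" and li: "lin_indep_over K x S" and i: "i \<in> S"
  shows "x i \<noteq> 0"
proof
  assume x0: "x i = 0"
  let ?c = "\<lambda>j. if j = i then (1::'a) else 0"
  have e: "(\<lambda>j. ?c j * x j) = (\<lambda>j. if j = i then x j else 0)" by auto
  have "(\<Sum>j\<in>S. ?c j * x j) = 0" using fin i x0 by (simp only: e sum.delta) simp
  moreover have "\<forall>j\<in>S. ?c j \<in> K" using sf_0[OF K] sf_1[OF K] by simp
  moreover have lic: "\<And>c. (\<forall>i\<in>S. c i \<in> K) \<Longrightarrow> (\<Sum>i\<in>S. c i * x i) = 0 \<Longrightarrow> (\<forall>i\<in>S. c i = 0)"
    using li unfolding lin_indep_over_def by blast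
  ultimately have "\<forall>j\<in>S. ?c j = 0" using lic[of ?c] by blast
  then show False using i by auto
qed

lemma lin_indep_insert:
  assumes K: "is_subfield K" and fin: "finite S" and li: "lin_indep_over K x S"
    and iS: "i \<notin> S" and ni: "x i \<notin> spn K x S"
  shows "lin_indep_over K x (insert i S)"
  unfolding lin_indep_over_def
proof (intro allI impI)
  fix c assume cK: "\<forall>j\<in>insert i S. c j \<in> K" and s: "(\<Sum>j\<in>insert i S. c j * x j) = 0"
  have s2: "c i * x i + (\<Sum>j\<in>S. c j * x j) = 0" using s fin iS by simp
  have ci: "c i = 0"
  proof (rule ccontr)
    assume nz: "c i \<noteq> 0"
    have "x i = (\<Sum>j\<in>S. (- (c j / c i)) * x j)"
    proof -
      have "c i * x i = - (\<Sum>j\<in>S. c j * x j)" using s2 by (simp add: eq_neg_iff_add_eq_0)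
      then have "x i = - (\<Sum>j\<in>S. c j * x j) / c i" using nz by (simp add: field_simps)
      also have "\<dots> = (\<Sum>j\<in>S. (- (c j / c i)) * x j)"
        by (simp add: sum_divide_distrib[symmetric] sum_negf)
      finally show ?thesis .
    qed
    moreover have "\<forall>j\<in>S. - (c j / c i) \<in> K" using cK sf_div[OF K] sf_uminus[OF K] by auto
    ultimately have "x i \<in> spn K x S" by (intro spnI[of S "\<lambda>j. - (c j / c i)"])
    with ni show False by simp
  qed
  then have "(\<Sum>j\<in>S. c j * x j) = 0" using s2 by simp
  then have "\<forall>j\<in>S. c j = 0" using li cK unfolding lin_indep_over_def by blast
  then show "\<forall>j\<in>insert i S. c j = 0" using ci by blast
qed

lemma card_spn_indep:
  assumes K: "is_subfield K" and fin: "finite S" and li: "lin_indep_over K x S"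
  shows "card (spn K x S) = card K ^ card S"
proof -
  let ?f = "\<lambda>c. (\<Sum>i\<in>S. c i * x i)"
  have img: "spn K x S = ?f ` (PiE S (\<lambda>_. K))"
  proof
    show "spn K x S \<subseteq> ?f ` (PiE S (\<lambda>_. K))"
    proof
      fix a assume "a \<in> spn K x S"
      then obtain c where a: "a = ?f c" "\<forall>i\<in>S. c i \<in> K" unfolding spn_def by blast
      have "restrict c S \<in> PiE S (\<lambda>_. K)" using a by auto
      moreover have "?f (restrict c S) = ?f c" by (rule sum.cong) auto
      ultimately show "a \<in> ?f ` (PiE S (\<lambda>_. K))" using a(1) by (intro image_eqI[where x="restrict c S"]) auto
    qed
  next
    show "?f ` (PiE S (\<lambda>_. K)) \<subseteq> spn K x S"
    proof
      fix a assume "a \<in> ?f ` (PiE S (\<lambda>_. K))"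
      then obtain c where c: "c \<in> PiE S (\<lambda>_. K)" "a = ?f c" by blast
      have "\<forall>i\<in>S. c i \<in> K" using c(1) by blast
      then show "a \<in> spn K x S" using c(2) by (rule spnI)
    qed
  qed
  have inj: "inj_on ?f (PiE S (\<lambda>_. K))"
  proof (rule inj_onI)
    fix c d assume c: "c \<in> PiE S (\<lambda>_. K)" and d: "d \<in> PiE S (\<lambda>_. K)" and e: "?f c = ?f d"
    have "(\<Sum>i\<in>S. (c i - d i) * x i) = ?f c - ?f d" by (simp add: sum_subtractf left_diff_distrib)
    then have "(\<Sum>i\<in>S. (c i - d i) * x i) = 0" using e by simp
    moreover have "\<forall>i\<in>S. c i - d i \<in> K" using c d sf_diff[OF K] by auto
    moreover have lic: "\<And>c. (\<forall>i\<in>S. c i \<in> K) \<Longrightarrow> (\<Sum>i\<in>S. c i * x i) = 0 \<Longrightarrow> (\<forall>i\<in>S. c i = 0)"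
      using li unfolding lin_indep_over_def by blast
    ultimately have "\<forall>i\<in>S. c i - d i = 0" using lic[of "\<lambda>i. c i - d i"] by blast
    then show "c = d" using c d by (intro PiE_ext) auto
  qed
  have "card (spn K x S) = card (PiE S (\<lambda>_. K))" unfolding img by (rule card_image[OF inj])
  also have "\<dots> = card K ^ card S" using fin by (simp add: card_PiE)
  finally show ?thesis .
qed

definition Sp :: "'a::field set \<Rightarrow> nat \<Rightarrow> (nat \<Rightarrow> 'a) \<Rightarrow> 'a set" where
  "Sp K n x = spn K x {0..<n}"

lemma lin_indep_cong:
  assumes "\<And>i. i \<in> S \<Longrightarrow> x i = y i"
  shows "lin_indep_over K x S = lin_indep_over K y S"
  unfolding lin_indep_over_def using assms by (simp cong: sum.cong)

lemma rk_cong: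
  assumes "\<And>i. i < n \<Longrightarrow> x i = y i"
  shows "rk K n x = rk K n y"
proof -
  have "\<And>S. S \<subseteq> {0..<n} \<Longrightarrow> lin_indep_over K x S = lin_indep_over K y S"
    by (rule lin_indep_cong) (use assms in auto)
  then have "{card S | S. S \<subseteq> {0..<n} \<and> lin_indep_over K x S} = {card S | S. S \<subseteq> {0..<n} \<and> lin_indep_over K y S}"
    by blast
  then show ?thesis unfolding rk_def by simp
qed

lemma spn_cong:
  assumes "\<And>i. i \<in> S \<Longrightarrow> x i = y i"
  shows "spn K x S = spn K y S"
proof -
  have "\<And>c. (\<Sum>i\<in>S. c i * x i) = (\<Sum>i\<in>S. c i * y i)" using assms by (simp cong: sum.cong)
  then show ?thesis unfolding spn_def by simp
qed

lemma Sp_cong: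
  assumes "\<And>i. i < n \<Longrightarrow> x i = y i"
  shows "Sp K n x = Sp K n y"
  unfolding Sp_def by (rule spn_cong) (use assms in auto)

lemma rk_max:
  shows "\<exists>S. S \<subseteq> {0..<n} \<and> lin_indep_over K x S \<and> card S = rk K n x"
    and "\<And>T. T \<subseteq> {0..<n} \<Longrightarrow> lin_indep_over K x T \<Longrightarrow> card T \<le> rk K n x"
proof -
  let ?M = "{card S | S. S \<subseteq> {0..<n} \<and> lin_indep_over K x S}"
  have fin: "finite ?M"
  proof -
    have "?M \<subseteq> card ` Pow {0..<n}" by auto
    then show ?thesis using finite_subset by blast
  qed
  have "lin_indep_over K x {}" unfolding lin_indep_over_def by simp
  then have ne: "?M \<noteq> {}" by blast
  have "rk K n x \<in> ?M" unfolding rk_def using Max_in[OF fin ne] .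
  then show "\<exists>S. S \<subseteq> {0..<n} \<and> lin_indep_over K x S \<and> card S = rk K n x" by auto
  fix T assume "T \<subseteq> {0..<n}" "lin_indep_over K x T"
  then have "card T \<in> ?M" by blast
  then show "card T \<le> rk K n x" unfolding rk_def using Max_ge[OF fin] by blast
qed

lemma rk_le: "rk K n x \<le> n"
proof -
  obtain S where "S \<subseteq> {0..<n}" "card S = rk K n x" using rk_max(1) by blast
  then show ?thesis using card_mono[of "{0..<n}" S] by simp
qed

lemma card_Sp:
  assumes K: "is_subfield K"
  shows "card (Sp K n x) = card K ^ rk K n x"
proof -
  obtain S where S: "S \<subseteq> {0..<n}" "lin_indep_over K x S" "card S = rk K n x" using rk_max(1) by blast
  have finS: "finite S" using S(1) finite_subset by blast
  have all: "\<forall>i<n. x i \<in> spn K x S"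
  proof (rule ccontr)
    assume "\<not> (\<forall>i<n. x i \<in> spn K x S)"
    then obtain i where i: "i < n" "x i \<notin> spn K x S" by blast
    have iS: "i \<notin> S" using i spn_gen[OF K finS] by blast
    have "lin_indep_over K x (insert i S)" by (rule lin_indep_insert[OF K finS S(2) iS i(2)])
    moreover have "insert i S \<subseteq> {0..<n}" using S(1) i by auto
    ultimately have "card (insert i S) \<le> rk K n x" using rk_max(2) by blast
    then show False using S(3) iS finS by simp
  qed
  have "Sp K n x = spn K x S"
  proof
    show "Sp K n x \<subseteq> spn K x S" unfolding Sp_def
      by (rule spn_least[OF K]) (use all spn_subsp[OF K finS] in auto)
    show "spn K x S \<subseteq> Sp K n x" unfolding Sp_def by (rule spn_mono[OF K]) (use S in auto)
  qed
  then show ?thesis using card_spn_indep[OF K finS S(2)] S(3) by simp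
qed

lemma Sp_Suc:
  "Sp K (Suc n) x = {s + k * x n | s k. s \<in> Sp K n x \<and> k \<in> K}"
proof
  show "Sp K (Suc n) x \<subseteq> {s + k * x n | s k. s \<in> Sp K n x \<and> k \<in> K}"
  proof
    fix a assume "a \<in> Sp K (Suc n) x"
    then obtain c where a: "a = (\<Sum>i\<in>{0..<Suc n}. c i * x i)" "\<forall>i\<in>{0..<Suc n}. c i \<in> K"
      unfolding Sp_def spn_def by blast
    have "a = (\<Sum>i\<in>{0..<n}. c i * x i) + c n * x n" using a(1) by simp
    moreover have "(\<Sum>i\<in>{0..<n}. c i * x i) \<in> Sp K n x" unfolding Sp_def
      by (rule spnI[of _ c]) (use a(2) in auto)
    moreover have "c n \<in> K" using a(2) by simp
    ultimately show "a \<in> {s + k * x n | s k. s \<in> Sp K n x \<and> k \<in> K}" by blast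
  qed
next
  show "{s + k * x n | s k. s \<in> Sp K n x \<and> k \<in> K} \<subseteq> Sp K (Suc n) x"
  proof
    fix a assume "a \<in> {s + k * x n | s k. s \<in> Sp K n x \<and> k \<in> K}"
    then obtain s k where sk: "a = s + k * x n" "s \<in> Sp K n x" "k \<in> K" by blast
    then obtain c where c: "s = (\<Sum>i\<in>{0..<n}. c i * x i)" "\<forall>i\<in>{0..<n}. c i \<in> K"
      unfolding Sp_def spn_def by blast
    let ?c = "c(n := k)"
    have "(\<Sum>i\<in>{0..<n}. ?c i * x i) = (\<Sum>i\<in>{0..<n}. c i * x i)" by (rule sum.cong) auto
    then have "(\<Sum>i\<in>{0..<n}. ?c i * x i) = s" using c(1) by simp
    then have "a = (\<Sum>i\<in>{0..<Suc n}. ?c i * x i)" using sk(1) by simp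
    moreover have "\<forall>i\<in>{0..<Suc n}. ?c i \<in> K" using c(2) sk(3) by auto
    ultimately show "a \<in> Sp K (Suc n) x" unfolding Sp_def by (intro spnI[of _ ?c])
  qed
qed

lemma Sp_subsp: "is_subfield K \<Longrightarrow> subsp K (Sp K n x)"
  unfolding Sp_def by (rule spn_subsp) auto

lemma Sp_Suc_in:
  assumes K: "is_subfield K" and xn: "x n \<in> Sp K n x"
  shows "Sp K (Suc n) x = Sp K n x"
proof
  show "Sp K (Suc n) x \<subseteq> Sp K n x"
    using Sp_subsp[OF K, of n x] xn unfolding Sp_Suc subsp_def by auto
  show "Sp K n x \<subseteq> Sp K (Suc n) x"
    unfolding Sp_def by (rule spn_mono[OF K]) auto
qed

lemma card_Sp_Suc_notin:
  assumes K: "is_subfield K" and xn: "x n \<notin> Sp K n (x :: nat \<Rightarrow> 'a::{field,finite})"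
  shows "card (Sp K (Suc n) x) = card (Sp K n x) * card K"
proof -
  let ?f = "\<lambda>(s, k). s + k * x n"
  have img: "Sp K (Suc n) x = ?f ` (Sp K n x \<times> K)" unfolding Sp_Suc by auto
  have inj: "inj_on ?f (Sp K n x \<times> K)"
  proof (rule inj_onI)
    fix p p' assume p: "p \<in> Sp K n x \<times> K" and p': "p' \<in> Sp K n x \<times> K" and e: "?f p = ?f p'"
    obtain s k where [simp]: "p = (s, k)" by (cases p)
    obtain s' k' where [simp]: "p' = (s', k')" by (cases p')
    have e2: "s + k * x n = s' + k' * x n" using e by simp
    have kk: "k = k'"
    proof (rule ccontr)
      assume ne: "k \<noteq> k'"
      have "x n = inverse (k - k') * (s' + (- 1) * s)"
      proof -
        have "(k - k') * x n = s' - s" using e2 by (simp add: algebra_simps)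
        then show ?thesis using ne by (simp add: field_simps)
      qed
      moreover have "inverse (k - k') \<in> K" using p p' sf_inverse[OF K] sf_diff[OF K] by auto
      moreover have "s' + (- 1) * s \<in> Sp K n x"
      proof -
        have V: "subsp K (Sp K n x)" by (rule Sp_subsp[OF K])
        have m1: "(- 1 :: 'a) \<in> K" using sf_uminus[OF K sf_1[OF K]] .
        have sS: "s \<in> Sp K n x" "s' \<in> Sp K n x" using p p' by auto
        have "(- 1) * s \<in> Sp K n x" using V m1 sS unfolding subsp_def by blast
        then show ?thesis using V sS unfolding subsp_def by blast
      qed
      ultimately have "x n \<in> Sp K n x"
        using Sp_subsp[OF K, of n x] unfolding subsp_def by auto
      then show False using xn by simp
    qed
    then have "s = s'" using e2 by simp
    then show "p = p'" using kk by simp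
  qed
  have "card (Sp K (Suc n) x) = card (Sp K n x \<times> K)" using img inj card_image by metis
  also have "\<dots> = card (Sp K n x) * card K" by (simp add: card_cartesian_product)
  finally show ?thesis .
qed

lemma card_K_ge2:
  assumes K: "is_subfield K" shows "2 \<le> card (K :: 'a::{field,finite} set)"
proof -
  have "{0, 1} \<subseteq> K" using sf_0[OF K] sf_1[OF K] by auto
  then have "card {0::'a, 1} \<le> card K" by (intro card_mono) auto
  then show ?thesis by simp
qed

lemma rk_Suc:
  assumes K: "is_subfield K"
  shows "rk K (Suc n) (x :: nat \<Rightarrow> 'a::{field,finite}) = (if x n \<in> Sp K n x then rk K n x else Suc (rk K n x))"
proof -
  have q: "1 < card K" using card_K_ge2[OF K] by simp
  show ?thesis
  proof (cases "x n \<in> Sp K n x")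
    case True
    then have "card K ^ rk K (Suc n) x = card K ^ rk K n x"
      using card_Sp[OF K, of "Suc n" x] card_Sp[OF K, of n x] Sp_Suc_in[OF K True] by simp
    then show ?thesis using True q by (simp add: power_inject_exp)
  next
    case False
    then have "card K ^ rk K (Suc n) x = card K ^ Suc (rk K n x)"
      using card_Sp[OF K, of "Suc n" x] card_Sp[OF K, of n x] card_Sp_Suc_notin[OF K False]
      by (metis mult.commute power_Suc)
    then have "rk K (Suc n) x = Suc (rk K n x)" using q by (metis power_inject_exp)
    then show ?thesis using False by simp
  qed
qed

lemma card_vecs_restr:
  "card {x \<in> vecs n. \<forall>i<n. x i \<in> A i} = (\<Prod>i<n. card (A i))"
proof -
  have "bij_betw (\<lambda>x. restrict x {..<n}) {x \<in> vecs n. \<forall>i<n. x i \<in> A i} (PiE {..<n} A)"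
  proof (rule bij_betw_byWitness[where f' = "\<lambda>y i. if i < n then y i else 0"])
    show "\<forall>x\<in>{x \<in> vecs n. \<forall>i<n. x i \<in> A i}. (\<lambda>i. if i < n then restrict x {..<n} i else 0) = x"
      by (auto simp: vecs_def fun_eq_iff)
    show "\<forall>y\<in>PiE {..<n} A. restrict (\<lambda>i. if i < n then y i else 0) {..<n} = y"
      by (auto simp: fun_eq_iff PiE_def extensional_def)
    show "(\<lambda>x. restrict x {..<n}) ` {x \<in> vecs n. \<forall>i<n. x i \<in> A i} \<subseteq> PiE {..<n} A"
      by (simp add: image_subset_iff restrict_PiE_iff)
    show "(\<lambda>y i. if i < n then y i else 0) ` PiE {..<n} A \<subseteq> {x \<in> vecs n. \<forall>i<n. x i \<in> A i}"
      by (auto simp: vecs_def PiE_def Pi_def)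
  qed
  then have "card {x \<in> vecs n. \<forall>i<n. x i \<in> A i} = card (PiE {..<n} A)" by (rule bij_betw_same_card)
  also have "\<dots> = (\<Prod>i<n. card (A i))" by (simp add: card_PiE)
  finally show ?thesis .
qed

lemma card_vecs: "card (vecs n :: (nat \<Rightarrow> 'a::{zero,finite}) set) = card (UNIV :: 'a set) ^ n"
proof -
  have "vecs n = {x \<in> vecs n. \<forall>i<n. x i \<in> (UNIV::'a set)}" by simp
  then show ?thesis using card_vecs_restr[of n "\<lambda>_. UNIV::'a set"] by simp
qed

lemma finite_vecs: "finite (vecs n :: (nat \<Rightarrow> 'a::{zero,finite}) set)"
proof -
  have "0 < card (UNIV :: 'a set)" by (rule finite_UNIV_card_ge_0) (rule finite_UNIV)
  then have "0 < card (UNIV :: 'a set) ^ n" by (rule zero_less_power)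
  then have "0 < card (vecs n :: (nat \<Rightarrow> 'a) set)" unfolding card_vecs .
  then show ?thesis by (rule card_ge_0_finite)
qed

lemma card_vecs_Suc:
  "card {x \<in> vecs (Suc n). P x} = (\<Sum>y\<in>vecs n. card {a::'a::{zero,finite}. P (y(n := a))})"
proof -
  let ?g = "\<lambda>(y, a). y(n := a)"
  let ?S = "SIGMA y:(vecs n :: (nat \<Rightarrow> 'a) set). {a. P (y(n := a))}"
  have img: "{x \<in> vecs (Suc n). P x} = ?g ` ?S"
  proof
    show "{x \<in> vecs (Suc n). P x} \<subseteq> ?g ` ?S"
    proof
      fix x assume x: "x \<in> {x \<in> vecs (Suc n). P x}"
      have "x(n := 0) \<in> vecs n" using x by (auto simp: vecs_def)
      moreover have "(x(n := 0))(n := x n) = x" by simp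
      ultimately have "(x(n := 0), x n) \<in> ?S" "?g (x(n := 0), x n) = x" using x by auto
      then show "x \<in> ?g ` ?S" by (intro image_eqI[where x="(x(n := 0), x n)"]) auto
    qed
    show "?g ` ?S \<subseteq> {x \<in> vecs (Suc n). P x}" by (auto simp: vecs_def)
  qed
  have inj: "inj_on ?g ?S"
  proof (rule inj_onI)
    fix p p' assume p: "p \<in> ?S" and p': "p' \<in> ?S" and e: "?g p = ?g p'"
    obtain y a where [simp]: "p = (y, a)" by (cases p)
    obtain y' a' where [simp]: "p' = (y', a')" by (cases p')
    have yn: "y n = 0" "y' n = 0" using p p' by (auto simp: vecs_def)
    have e2: "y(n := a) = y'(n := a')" using e by simp
    have "a = (y(n := a)) n" by simp
    also have "\<dots> = (y'(n := a')) n" using e2 by simp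
    also have "\<dots> = a'" by simp
    finally have "a = a'" .
    moreover have "y = y'"
    proof
      fix i show "y i = y' i"
      proof (cases "i = n")
        case True then show ?thesis using yn by simp
      next
        case False then show ?thesis using fun_cong[OF e2, of i] by simp
      qed
    qed
    ultimately show "p = p'" by simp
  qed
  have "card {x \<in> vecs (Suc n). P x} = card ?S" unfolding img by (rule card_image[OF inj])
  also have "\<dots> = (\<Sum>y\<in>vecs n. card {a::'a. P (y(n := a))})"
    by (rule card_SigmaI) (auto simp: finite_vecs)
  finally show ?thesis .
qed


definition Nr :: "'a::{field,finite} set \<Rightarrow> nat \<Rightarrow> nat \<Rightarrow> nat" where
  "Nr K n u = card {x \<in> vecs n. rk K n x = u}"

lemma rk_upd:
  assumes K: "is_subfield K"
  shows "rk K (Suc n) ((y :: nat \<Rightarrow> 'a::{field,finite})(n := a)) = (if a \<in> Sp K n y then rk K n y else Suc (rk K n y))"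
proof -
  have "rk K n (y(n := a)) = rk K n y" by (rule rk_cong) auto
  moreover have "Sp K n (y(n := a)) = Sp K n y" by (rule Sp_cong) auto
  ultimately show ?thesis using rk_Suc[OF K, of n "y(n := a)"] by simp
qed

lemma card_fiber:
  assumes K: "is_subfield K"
  shows "card {a. rk K (Suc n) ((y :: nat \<Rightarrow> 'a::{field,finite})(n := a)) = u} =
    (if rk K n y = u then card (Sp K n y) else 0) + (if Suc (rk K n y) = u then card (UNIV::'a set) - card (Sp K n y) else 0)"
proof -
  define r where "r = rk K n y"
  define V where "V = Sp K n y"
  have eq0: "{a. rk K (Suc n) (y(n := a)) = u} = {a. (if a \<in> V then r else Suc r) = u}"
    unfolding r_def V_def using rk_upd[OF K, of n y] by presburger
  show ?thesis
  proof (cases "r = u")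
    case True
    then have "{a. (if a \<in> V then r else Suc r) = u} = V" by auto
    then show ?thesis using True eq0 unfolding r_def V_def by simp
  next
    case False
    show ?thesis
    proof (cases "Suc r = u")
      case True
      then have "{a. (if a \<in> V then r else Suc r) = u} = UNIV - V" by auto
      then have "card {a. rk K (Suc n) (y(n := a)) = u} = card (UNIV::'a set) - card V"
        using eq0 by (simp add: card_Diff_subset)
      then show ?thesis using True False unfolding r_def V_def by simp
    next
      case False2: False
      then have "{a. (if a \<in> V then r else Suc r) = u} = {}" using False by auto
      then show ?thesis using False False2 eq0 unfolding r_def V_def by simp
    qed
  qed
qed

lemma sum_if_const:
  "finite A \<Longrightarrow> (\<Sum>y\<in>A. if P y then (c::nat) else 0) = c * card {y \<in> A. P y}"
  by (simp add: sum.inter_filter[symmetric])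

lemma Nr_Suc:
  fixes K :: "'a::{field,finite} set"
  assumes K: "is_subfield K"
  shows "Nr K (Suc n) u = (if u = 0 then Nr K n 0 else
     card K ^ u * Nr K n u + (card (UNIV :: 'a set) - card K ^ (u - 1)) * Nr K n (u - 1))"
proof -
  define Q where "Q = card (UNIV :: 'a set)"
  have s0: "Nr K (Suc n) u = (\<Sum>y\<in>vecs n. card {a::'a. rk K (Suc n) (y(n := a)) = u})"
    unfolding Nr_def by (rule card_vecs_Suc)
  have eq: "\<And>y. card {a::'a. rk K (Suc n) (y(n := a)) = u} =
      (if rk K n y = u then card K ^ u else 0) + (if Suc (rk K n y) = u then Q - card K ^ rk K n y else 0)"
    unfolding Q_def card_fiber[OF K] card_Sp[OF K] by simp
  have fin: "finite (vecs n :: (nat \<Rightarrow> 'a) set)" by (rule finite_vecs)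
  show ?thesis
  proof (cases u)
    case 0
    have "Nr K (Suc n) u = (\<Sum>y\<in>vecs n. (if rk K n y = u then card K ^ u else 0) + (if Suc (rk K n y) = u then Q - card K ^ rk K n y else 0))"
      unfolding s0 eq ..
    also have "\<dots> = (\<Sum>y\<in>vecs n. if rk K n y = 0 then 1 else 0)" unfolding 0 power_0 by (rule sum.cong) auto
    also have "\<dots> = Nr K n 0" using sum_if_const[OF fin, of "\<lambda>y. rk K n y = 0" 1] by (simp add: Nr_def)
    finally show ?thesis using 0 by simp
  next
    case (Suc v)
    have e2: "\<And>y. (if Suc (rk K n y) = u then Q - card K ^ rk K n y else 0) = (if rk K n y = v then Q - card K ^ v else 0)"
      using Suc by auto
    have "Nr K (Suc n) u = (\<Sum>y\<in>vecs n. (if rk K n y = u then card K ^ u else 0) + (if rk K n y = v then Q - card K ^ v else 0))"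
      unfolding s0 eq e2 ..
    also have "\<dots> = (\<Sum>y\<in>vecs n. if rk K n y = u then card K ^ u else 0) + (\<Sum>y\<in>vecs n. if rk K n y = v then Q - card K ^ v else 0)"
      by (rule sum.distrib)
    also have "\<dots> = card K ^ u * Nr K n u + (Q - card K ^ v) * Nr K n v"
      unfolding sum_if_const[OF fin] Nr_def ..
    finally show ?thesis using Suc Q_def by simp
  qed
qed

lemma alpha_0: "alpha q m 0 = 1" by (simp add: alpha_def)

lemma alpha_Suc: "alpha q m (Suc u) = alpha q m u * (real q ^ m - real q ^ u)"
  by (simp add: alpha_def)

lemma alpha_zero_Suc: "alpha q 0 (Suc v) = 0"
  unfolding alpha_def by (subst prod.lessThan_Suc_shift) simp

lemma alpha_shift: "alpha q (Suc n) (Suc v) = (real q ^ Suc n - 1) * real q ^ v * alpha q n v"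
proof -
  have "alpha q (Suc n) (Suc v) = (real q ^ Suc n - 1) * (\<Prod>i<v. real q ^ Suc n - real q ^ Suc i)"
    unfolding alpha_def by (subst prod.lessThan_Suc_shift) simp
  also have "(\<Prod>i<v. real q ^ Suc n - real q ^ Suc i) = (\<Prod>i<v. real q * (real q ^ n - real q ^ i))"
    by (rule prod.cong) (auto simp: algebra_simps)
  also have "\<dots> = real q ^ v * alpha q n v"
    by (simp add: prod.distrib alpha_def)
  finally show ?thesis by simp
qed

lemma alpha_pos: "2 \<le> q \<Longrightarrow> alpha q v v > 0"
  unfolding alpha_def
proof (rule prod_pos)
  fix i assume "2 \<le> q" "i \<in> {..<v}"
  then have "real q ^ i < real q ^ v" by (intro power_strict_increasing) auto
  then show "0 < real q ^ v - real q ^ i" by simp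
qed

lemma gauss_0: "2 \<le> q \<Longrightarrow> gauss_binom q n 0 = 1"
  by (simp add: gauss_binom_def alpha_def)

lemma gauss_zero_Suc: "gauss_binom q 0 (Suc v) = 0"
  by (simp add: gauss_binom_def alpha_zero_Suc)

lemma cancel3:
  fixes x y t A B :: real
  assumes "t \<noteq> 0"
  shows "x * t * A / (y * t * B) = x * A / (y * B)"
proof -
  have "x * t * A / (y * t * B) = (t * (x * A)) / (t * (y * B))" by (simp add: ac_simps)
  also have "\<dots> = x * A / (y * B)" using assms by (rule mult_divide_mult_cancel_left)
  finally show ?thesis .
qed

lemma qp_alg:
  fixes q N t A B :: real
  assumes "t > 0" "B > 0" "q * t - 1 > 0"
  shows "(q * N - 1) * A / ((q * t - 1) * B) = (q * t) * (A * (N - t) / ((q * t - 1) * t * B)) + A / B"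
proof -
  have "(q * t) * (A * (N - t) / ((q * t - 1) * t * B)) = q * A * (N - t) / ((q * t - 1) * B)"
    using assms by (simp add: field_simps)
  also have "\<dots> + A / B = (q * A * (N - t) + A * (q * t - 1)) / ((q * t - 1) * B)"
    using assms by (simp add: add_divide_distrib field_simps)
  also have "q * A * (N - t) + A * (q * t - 1) = (q * N - 1) * A" by (simp add: algebra_simps)
  finally show ?thesis by simp
qed

lemma qpascal:
  assumes q: "2 \<le> q"
  shows "gauss_binom q (Suc n) (Suc v) = real q ^ Suc v * gauss_binom q n (Suc v) + gauss_binom q n v"
proof -
  have a: "alpha q v v > 0" using alpha_pos[OF q] .
  have qv: "real q ^ Suc v - 1 > 0"
  proof -
    have "1 < real q ^ Suc v" using q by (intro one_less_power) auto
    then show ?thesis by simp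
  qed
  have qv0: "real q ^ v > 0" using q by simp
  have L: "gauss_binom q (Suc n) (Suc v) = (real q ^ Suc n - 1) * alpha q n v / ((real q ^ Suc v - 1) * alpha q v v)"
    unfolding gauss_binom_def alpha_shift using qv0 by (intro cancel3) simp
  have R1: "gauss_binom q n (Suc v) = alpha q n v * (real q ^ n - real q ^ v) / ((real q ^ Suc v - 1) * real q ^ v * alpha q v v)"
    unfolding gauss_binom_def alpha_shift[of q v v] alpha_Suc[of q n v] by simp
  have "gauss_binom q (Suc n) (Suc v) = (real q * real q ^ n - 1) * alpha q n v / ((real q * real q ^ v - 1) * alpha q v v)"
    unfolding L by simp
  also have "\<dots> = (real q * real q ^ v) * (alpha q n v * (real q ^ n - real q ^ v) / ((real q * real q ^ v - 1) * real q ^ v * alpha q v v)) + alpha q n v / alpha q v v"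
    by (rule qp_alg) (use a qv qv0 in auto)
  also have "\<dots> = real q ^ Suc v * gauss_binom q n (Suc v) + gauss_binom q n v"
    by (simp only: R1 gauss_binom_def[of q n v] power_Suc)
  finally show ?thesis .
qed

lemma Nr_formula:
  fixes K :: "'a::{field,finite} set"
  assumes K: "is_subfield K" and q: "card K = q" and Q: "card (UNIV :: 'a set) = q ^ m"
  shows "real (Nr K n u) = gauss_binom q n u * alpha q m u"
proof (induction n arbitrary: u)
  case 0
  have r0: "\<And>x. rk K 0 x = 0" using rk_le by (metis le_zero_eq)
  have c1: "card (vecs 0 :: (nat \<Rightarrow> 'a) set) = 1" by (simp add: card_vecs)
  show ?case
  proof (cases u)
    case 0
    then show ?thesis using r0 c1 card_K_ge2[OF K] q by (simp add: Nr_def gauss_0 alpha_0)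
  next
    case (Suc v)
    then show ?thesis using r0 by (simp add: Nr_def gauss_zero_Suc)
  qed
next
  case (Suc n)
  have q2: "2 \<le> q" using card_K_ge2[OF K] q by simp
  show ?case
  proof (cases u)
    case 0
    then show ?thesis using Suc.IH[of 0] Nr_Suc[OF K, of n 0] q2 by (simp add: gauss_0 alpha_0)
  next
    case (Suc v)
    have le: "real (card (UNIV :: 'a set) - card K ^ v) * real (Nr K n v) =
              (real q ^ m - real q ^ v) * real (Nr K n v)"
    proof (cases "Nr K n v = 0")
      case True then show ?thesis by simp
    next
      case False
      then have "{x \<in> vecs n. rk K n x = v} \<noteq> {}" unfolding Nr_def by (metis card.empty)
      then obtain x :: "nat \<Rightarrow> 'a" where "rk K n x = v" by blast
      then have "card K ^ v = card (Sp K n x)" using card_Sp[OF K] by simp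
      also have "\<dots> \<le> card (UNIV :: 'a set)" by (rule card_mono) auto
      finally have "card K ^ v \<le> card (UNIV :: 'a set)" .
      then show ?thesis using q Q by (simp add: of_nat_diff)
    qed
    have "real (Nr K (Suc n) u) = real q ^ Suc v * real (Nr K n (Suc v)) +
        real (card (UNIV :: 'a set) - card K ^ v) * real (Nr K n v)"
      using Nr_Suc[OF K, of n u] Suc q by simp
    also have "\<dots> = real q ^ Suc v * (gauss_binom q n (Suc v) * alpha q m (Suc v)) +
        (real q ^ m - real q ^ v) * (gauss_binom q n v * alpha q m v)"
      using le unfolding Suc.IH by simp
    also have "\<dots> = gauss_binom q (Suc n) (Suc v) * alpha q m (Suc v)"
      unfolding qpascal[OF q2] alpha_Suc by (simp add: algebra_simps)
    finally show ?thesis using Suc by simp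
  qed
qed

lemma card_ball0:
  fixes K :: "'a::{field,finite} set"
  assumes K: "is_subfield K" and q: "card K = q" and Q: "card (UNIV :: 'a set) = q ^ m"
  shows "real (card {x \<in> vecs n. rk K n x \<le> r}) = ball_vol q m n r"
proof (induction r)
  case 0
  then show ?case using Nr_formula[OF K q Q, of n 0] by (simp add: ball_vol_def Nr_def)
next
  case (Suc r)
  have "{x \<in> vecs n. rk K n x \<le> Suc r} = {x \<in> vecs n. rk K n x \<le> r} \<union> {x \<in> vecs n. rk K n x = Suc r}"
    by auto
  moreover have "card (\<dots>) = card {x \<in> vecs n. rk K n x \<le> r} + card {x \<in> vecs n. rk K n x = Suc r}"
    by (rule card_Un_disjoint) (auto simp: finite_vecs)
  ultimately have "real (card {x \<in> vecs n. rk K n x \<le> Suc r}) =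
     real (card {x \<in> vecs n. rk K n x \<le> r}) + real (Nr K n (Suc r))" by (simp add: Nr_def)
  then show ?case using Suc.IH Nr_formula[OF K q Q, of n "Suc r"] by (simp add: ball_vol_def)
qed

lemma rk_supp:
  assumes K: "is_subfield K" and A: "finite A" and z: "\<And>i. i < n \<Longrightarrow> z i \<noteq> 0 \<Longrightarrow> i \<in> A"
  shows "rk K n z \<le> card A"
proof -
  obtain S where S: "S \<subseteq> {0..<n}" "lin_indep_over K z S" "card S = rk K n z" using rk_max(1) by blast
  have finS: "finite S" using S(1) finite_subset by blast
  have "S \<subseteq> A"
  proof
    fix i assume i: "i \<in> S"
    then have "z i \<noteq> 0" using lin_indep_nonzero[OF K finS S(2)] by blast
    then show "i \<in> A" using z S(1) i by auto
  qed
  then show ?thesis using S(3) card_mono[OF A] by metis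
qed

lemma rk_mono_n:
  assumes "r \<le> n" shows "rk K r x \<le> rk K n x"
proof -
  obtain S where S: "S \<subseteq> {0..<r}" "lin_indep_over K x S" "card S = rk K r x" using rk_max(1) by blast
  have "S \<subseteq> {0..<n}" using S(1) assms by auto
  then show ?thesis using rk_max(2)[of S n K x] S by simp
qed

lemma full_rank_exists:
  fixes K :: "'a::{field,finite} set"
  assumes K: "is_subfield K" and Q: "card (UNIV :: 'a set) = card K ^ m" and k: "k \<le> m"
  shows "\<exists>x :: nat \<Rightarrow> 'a. x \<in> vecs k \<and> rk K k x = k"
  using k
proof (induction k)
  case 0
  have "(\<lambda>_. 0) \<in> (vecs 0 :: (nat \<Rightarrow> 'a) set)" by (simp add: vecs_def)
  moreover have "rk K 0 (\<lambda>_. 0::'a) = 0" using rk_le by (metis le_zero_eq)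
  ultimately show ?case by blast
next
  case (Suc k)
  then obtain x :: "nat \<Rightarrow> 'a" where x: "x \<in> vecs k" "rk K k x = k" by auto
  have q: "1 < card K" using card_K_ge2[OF K] by simp
  have "card (Sp K k x) = card K ^ k" using card_Sp[OF K] x by simp
  also have "\<dots> < card K ^ m" using Suc.prems q by (intro power_strict_increasing) auto
  finally have "card (Sp K k x) < card (UNIV :: 'a set)" using Q by simp
  then have "Sp K k x \<noteq> UNIV" by auto
  then obtain a where a: "a \<notin> Sp K k x" by blast
  have "x(k := a) \<in> vecs (Suc k)" using x(1) by (auto simp: vecs_def)
  moreover have "rk K (Suc k) (x(k := a)) = Suc k" using rk_upd[OF K, of k x a] a x(2) by simp
  ultimately show ?case by blast
qed

lemma card_ball_shift:
  fixes c :: "nat \<Rightarrow> 'a::{field,finite}"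
  assumes c: "c \<in> vecs n"
  shows "card {x \<in> vecs n. rk K n (\<lambda>i. x i - c i) \<le> r} = card {x \<in> vecs n. rk K n x \<le> r}"
proof -
  have "bij_betw (\<lambda>x i. x i - c i) {x \<in> vecs n. rk K n (\<lambda>i. x i - c i) \<le> r} {x \<in> vecs n. rk K n x \<le> r}"
  proof (rule bij_betw_byWitness[where f' = "\<lambda>z i. z i + c i"])
    show "\<forall>a\<in>{x \<in> vecs n. rk K n (\<lambda>i. x i - c i) \<le> r}. (\<lambda>i. (a i - c i) + c i) = a" by auto
    show "\<forall>a'\<in>{x \<in> vecs n. rk K n x \<le> r}. (\<lambda>i. (a' i + c i) - c i) = a'" by auto
    show "(\<lambda>x i. x i - c i) ` {x \<in> vecs n. rk K n (\<lambda>i. x i - c i) \<le> r} \<subseteq> {x \<in> vecs n. rk K n x \<le> r}"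
      using c by (auto simp: vecs_def)
    show "(\<lambda>z i. z i + c i) ` {x \<in> vecs n. rk K n x \<le> r} \<subseteq> {x \<in> vecs n. rk K n (\<lambda>i. x i - c i) \<le> r}"
      using c by (auto simp: vecs_def)
  qed
  then show ?thesis by (rule bij_betw_same_card)
qed

lemma Sp_repr:
  fixes K :: "'a::{field,finite} set"
  assumes K: "is_subfield K"
  shows "\<exists>w. w \<in> vecs (rk K n x) \<and> Sp K (rk K n x) w = Sp K n x"
proof (induction n)
  case 0
  have r0: "rk K 0 x = 0" using rk_le by (metis le_zero_eq)
  have "(\<lambda>_. 0) \<in> (vecs 0 :: (nat \<Rightarrow> 'a) set)" by (simp add: vecs_def)
  moreover have "Sp K 0 (\<lambda>_. 0::'a) = Sp K 0 x" by (rule Sp_cong) auto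
  ultimately show ?case using r0 by auto
next
  case (Suc n)
  then obtain w where w: "w \<in> vecs (rk K n x)" "Sp K (rk K n x) w = Sp K n x" by blast
  show ?case
  proof (cases "x n \<in> Sp K n x")
    case True
    then have "rk K (Suc n) x = rk K n x" "Sp K (Suc n) x = Sp K n x"
      using rk_Suc[OF K, of n x] Sp_Suc_in[OF K True] by simp_all
    then show ?thesis using w by (intro exI[of _ w]) simp
  next
    case False
    let ?r = "rk K n x"
    let ?w = "w(?r := x n)"
    have "?w \<in> vecs (Suc ?r)" using w(1) by (auto simp: vecs_def)
    moreover have "Sp K (Suc ?r) ?w = Sp K (Suc n) x"
    proof -
      have "Sp K ?r ?w = Sp K ?r w" by (rule Sp_cong) auto
      then show ?thesis unfolding Sp_Suc using w(2) by simp
    qed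
    moreover have "rk K (Suc n) x = Suc ?r" using rk_Suc[OF K, of n x] False by simp
    ultimately have "?w \<in> vecs (rk K (Suc n) x) \<and> Sp K (rk K (Suc n) x) ?w = Sp K (Suc n) x" by simp
    then show ?thesis by blast
  qed
qed

lemma Sp_pad:
  fixes K :: "'a::{field,finite} set"
  assumes K: "is_subfield K" and w: "w \<in> vecs r"
  shows "Sp K (r + d) w = Sp K r w"
proof (induction d)
  case 0 then show ?case by simp
next
  case (Suc d)
  have "w (r + d) = 0" using w by (simp add: vecs_def)
  then have "w (r + d) \<in> Sp K (r + d) w" using Sp_subsp[OF K] unfolding subsp_def by simp
  then show ?case using Sp_Suc_in[OF K] Suc by simp
qed

lemma ball_small:
  fixes K :: "'a::{field,finite} set"
  assumes K: "is_subfield K" and r: "1 \<le> r" and Q1: "1 < card (UNIV :: 'a set)"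
  shows "card {x :: nat \<Rightarrow> 'a. x \<in> vecs n \<and> rk K n x \<le> r} < card (UNIV :: 'a set) ^ r * (card K ^ r) ^ n"
proof -
  define Q where "Q = card (UNIV :: 'a set)"
  define X where "X = (card K ^ r) ^ n"
  define T where "T w = {x :: nat \<Rightarrow> 'a. x \<in> vecs n \<and> (\<forall>i<n. x i \<in> Sp K r w)}" for w :: "nat \<Rightarrow> 'a"
  have sub: "{x :: nat \<Rightarrow> 'a. x \<in> vecs n \<and> rk K n x \<le> r} \<subseteq> (\<Union>w\<in>vecs r. T w)"
  proof
    fix x :: "nat \<Rightarrow> 'a" assume x: "x \<in> {x. x \<in> vecs n \<and> rk K n x \<le> r}"
    obtain w where w: "w \<in> vecs (rk K n x)" "Sp K (rk K n x) w = Sp K n x" using Sp_repr[OF K] by blast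
    have le: "rk K n x \<le> r" using x by simp
    have wr: "w \<in> vecs r" using w(1) le by (auto simp: vecs_def)
    have "Sp K r w = Sp K (rk K n x + (r - rk K n x)) w" using le by simp
    also have "\<dots> = Sp K n x" using Sp_pad[OF K w(1)] w(2) by simp
    finally have "\<forall>i<n. x i \<in> Sp K r w" unfolding Sp_def using spn_gen[OF K] by auto
    then show "x \<in> (\<Union>w\<in>vecs r. T w)" using wr x unfolding T_def by blast
  qed
  have z: "\<And>w. (\<lambda>_. 0) \<in> T w"
    unfolding T_def using Sp_subsp[OF K] by (auto simp: vecs_def subsp_def)
  have cT: "\<And>w. card (T w) \<le> X"
  proof -
    fix w
    have "card (T w) = (\<Prod>i<n. card (Sp K r w))" unfolding T_def by (rule card_vecs_restr)
    also have "\<dots> = card (Sp K r w) ^ n" by simp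
    also have "\<dots> \<le> X" unfolding X_def card_Sp[OF K]
      using card_K_ge2[OF K] rk_le[of K r w] by (intro power_mono power_increasing) auto
    finally show "card (T w) \<le> X" .
  qed
  have finT: "finite (T w)" for w
  proof -
    have "T w \<subseteq> vecs n" unfolding T_def by blast
    then show ?thesis by (rule finite_subset) (rule finite_vecs)
  qed
  have "(\<Union>w\<in>vecs r. T w) \<subseteq> insert (\<lambda>_. 0) (\<Union>w\<in>vecs r. T w - {\<lambda>_. 0})" by blast
  then have "card (\<Union>w\<in>vecs r. T w) \<le> card (insert (\<lambda>_. 0) (\<Union>w\<in>vecs r. T w - {\<lambda>_. 0}))"
    by (intro card_mono) (auto simp: finite_vecs finT)
  also have "\<dots> \<le> Suc (card (\<Union>w\<in>vecs r. T w - {\<lambda>_. 0}))" by (rule card_insert_le_m1) (auto simp: card_insert_if finite_vecs finT)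
  also have "card (\<Union>w\<in>vecs r. T w - {\<lambda>_. 0}) \<le> (\<Sum>w\<in>vecs r. card (T w - {\<lambda>_. 0}))"
    by (rule card_UN_le) (simp add: finite_vecs)
  also have "\<dots> = (\<Sum>w\<in>vecs r. card (T w) - 1)" using z finT by (simp add: card_Diff_singleton)
  also have "\<dots> \<le> (\<Sum>w\<in>(vecs r :: (nat \<Rightarrow> 'a) set). X - 1)" by (rule sum_mono) (use cT in \<open>auto simp: diff_le_mono\<close>)
  also have "\<dots> = Q ^ r * (X - 1)" by (simp add: card_vecs Q_def)
  finally have "card (\<Union>w\<in>vecs r. T w) \<le> Suc (Q ^ r * (X - 1))" by simp
  moreover have "Suc (Q ^ r * (X - 1)) < Q ^ r * X"
  proof -
    have X1: "1 \<le> X" unfolding X_def using card_K_ge2[OF K] by simp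
    have Qr: "1 < Q ^ r" unfolding Q_def using Q1 r by (intro one_less_power) auto
    have "Q ^ r * X = Q ^ r * (X - 1) + Q ^ r" using X1 by (simp add: algebra_simps)
    then show ?thesis using Qr by simp
  qed
  ultimately have "card (\<Union>w\<in>vecs r. T w) < Q ^ r * X" by simp
  moreover have "card {x :: nat \<Rightarrow> 'a. x \<in> vecs n \<and> rk K n x \<le> r} \<le> card (\<Union>w\<in>vecs r. T w)"
    by (rule card_mono[OF _ sub]) (auto simp: finite_vecs finT)
  ultimately show ?thesis unfolding Q_def X_def by simp
qed

lemma cov_exists:
  fixes K :: "'a::{field,finite} set" and C :: "(nat \<Rightarrow> 'a) set"
  assumes C: "C \<subseteq> vecs n" "C \<noteq> {}" "rank_cov_radius K n C = \<rho>" and x: "x \<in> vecs n"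
  shows "\<exists>c\<in>C. rk K n (\<lambda>i. x i - c i) \<le> \<rho>"
proof -
  have finC: "finite C" using C(1) finite_subset finite_vecs by blast
  let ?f = "\<lambda>x. Min (rank_dist K n x ` C)"
  have "?f x \<le> Max (?f ` vecs n)"
    by (rule Max_ge) (use x finite_vecs in auto)
  then have le: "?f x \<le> \<rho>" using C(3) unfolding rank_cov_radius_def by simp
  have "?f x \<in> rank_dist K n x ` C" by (rule Min_in) (use finC C(2) in auto)
  then obtain c where "c \<in> C" "rank_dist K n x c = ?f x" by auto
  then have "c \<in> C \<and> rk K n (\<lambda>i. x i - c i) \<le> \<rho>" using le unfolding rank_dist_def by simp
  then show ?thesis by blast
qed

lemma prod_if_lt:
  "(\<Prod>i<n. if i < r then 1 else (Q::nat)) = Q ^ (n - r)"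
proof (induction n)
  case 0 then show ?case by simp
next
  case (Suc n)
  then show ?case by (cases "n < r") (auto simp: Suc_diff_le)
qed

lemma ball_lt:
  fixes K :: "'a::{field,finite} set"
  assumes K: "is_subfield K" and q: "card K = q" and Q: "card (UNIV :: 'a set) = q ^ m"
    and nm: "n \<le> m" and r0: "0 < \<rho>" and rn: "\<rho> < n"
  shows "card {x :: nat \<Rightarrow> 'a. x \<in> vecs n \<and> rk K n x \<le> \<rho>} < card (UNIV :: 'a set) ^ min n (2 * \<rho>)"
proof (cases "n \<le> 2 * \<rho>")
  case True
  obtain z :: "nat \<Rightarrow> 'a" where z: "z \<in> vecs n" "rk K n z = n"
    using full_rank_exists[OF K _ nm] Q q by blast
  have "z \<notin> {x :: nat \<Rightarrow> 'a. x \<in> vecs n \<and> rk K n x \<le> \<rho>}" using z rn by simp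
  then have "{x :: nat \<Rightarrow> 'a. x \<in> vecs n \<and> rk K n x \<le> \<rho>} < vecs n" using z(1) by blast
  then have "card {x :: nat \<Rightarrow> 'a. x \<in> vecs n \<and> rk K n x \<le> \<rho>} < card (vecs n :: (nat \<Rightarrow> 'a) set)"
    by (rule psubset_card_mono[OF finite_vecs])
  then show ?thesis using True by (simp add: card_vecs)
next
  case False
  have m1: "1 \<le> m" using r0 rn nm by simp
  have q2: "2 \<le> q" using card_K_ge2[OF K] q by simp
  have Q1: "1 < card (UNIV :: 'a set)" unfolding Q using q2 m1 by (intro one_less_power) auto
  have "card {x :: nat \<Rightarrow> 'a. x \<in> vecs n \<and> rk K n x \<le> \<rho>} < card (UNIV :: 'a set) ^ \<rho> * (card K ^ \<rho>) ^ n"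
    by (rule ball_small[OF K _ Q1]) (use r0 in simp)
  also have "(card K ^ \<rho>) ^ n \<le> card (UNIV :: 'a set) ^ \<rho>"
  proof -
    have "(card K ^ \<rho>) ^ n = q ^ (n * \<rho>)" using q by (simp add: power_mult[symmetric] mult.commute)
    also have "\<dots> \<le> q ^ (m * \<rho>)" using q2 nm by (intro power_increasing) auto
    also have "\<dots> = card (UNIV :: 'a set) ^ \<rho>" using Q by (simp add: power_mult)
    finally show ?thesis .
  qed
  then have "card (UNIV :: 'a set) ^ \<rho> * (card K ^ \<rho>) ^ n \<le> card (UNIV :: 'a set) ^ \<rho> * card (UNIV :: 'a set) ^ \<rho>"
    by (rule mult_left_mono) simp
  also have "\<dots> = card (UNIV :: 'a set) ^ min n (2 * \<rho>)" using False by (simp add: power_add[symmetric] mult_2)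
  finally show ?thesis .
qed

lemma lower_code:
  fixes K :: "'a::{field,finite} set" and C :: "(nat \<Rightarrow> 'a) set"
  assumes K: "is_subfield K" and q: "card K = q" and Q: "card (UNIV :: 'a set) = q ^ m"
    and nm: "n \<le> m" and r0: "0 < \<rho>" and rn: "\<rho> < n"
    and C: "C \<subseteq> vecs n" "C \<noteq> {}" "rank_cov_radius K n C = \<rho>"
  shows "card (vecs n :: (nat \<Rightarrow> 'a) set) < card C * card {x :: nat \<Rightarrow> 'a. x \<in> vecs n \<and> rk K n x \<le> \<rho>}"
proof -
  define B0 where "B0 = {x :: nat \<Rightarrow> 'a. x \<in> vecs n \<and> rk K n x \<le> \<rho>}"
  define Bc where "Bc c = {x :: nat \<Rightarrow> 'a. x \<in> vecs n \<and> rk K n (\<lambda>i. x i - c i) \<le> \<rho>}" for c :: "nat \<Rightarrow> 'a"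
  have finC: "finite C" using C(1) finite_subset finite_vecs by blast
  have finB: "finite (Bc c)" for c
  proof -
    have "Bc c \<subseteq> vecs n" unfolding Bc_def by blast
    then show ?thesis by (rule finite_subset) (rule finite_vecs)
  qed
  have cB: "card (Bc c) = card B0" if "c \<in> C" for c
    unfolding Bc_def B0_def by (rule card_ball_shift) (use that C(1) in auto)
  have cover: "vecs n = (\<Union>c\<in>C. Bc c)"
  proof
    show "vecs n \<subseteq> (\<Union>c\<in>C. Bc c)"
    proof
      fix x :: "nat \<Rightarrow> 'a" assume x: "x \<in> vecs n"
      obtain c where "c \<in> C" "rk K n (\<lambda>i. x i - c i) \<le> \<rho>" using cov_exists[OF C x] by blast
      then show "x \<in> (\<Union>c\<in>C. Bc c)" unfolding Bc_def using x by blast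
    qed
    show "(\<Union>c\<in>C. Bc c) \<subseteq> vecs n" unfolding Bc_def by blast
  qed
  have sumB: "(\<Sum>c\<in>D. card (Bc c)) = card D * card B0" if "D \<subseteq> C" for D
  proof -
    have "(\<Sum>c\<in>D. card (Bc c)) = (\<Sum>c\<in>D. card B0)" by (rule sum.cong) (use cB that in auto)
    then show ?thesis by simp
  qed
  have overlap: "\<exists>c\<in>C. \<exists>c'\<in>C. c \<noteq> c' \<and> Bc c \<inter> Bc c' \<noteq> {}"
  proof (rule ccontr)
    assume disj: "\<not> (\<exists>c\<in>C. \<exists>c'\<in>C. c \<noteq> c' \<and> Bc c \<inter> Bc c' \<noteq> {})"
    define p where "p = n - min n (2 * \<rho>)"
    define \<pi> where "\<pi> c = (\<lambda>i. if i < p then c i else 0)" for c :: "nat \<Rightarrow> 'a"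
    have inj: "inj_on \<pi> C"
    proof (rule inj_onI)
      fix c c' assume c: "c \<in> C" and c': "c' \<in> C" and e: "\<pi> c = \<pi> c'"
      show "c = c'"
      proof (rule ccontr)
        assume ne: "c \<noteq> c'"
        have agree: "c i = c' i" if "i < p" for i using fun_cong[OF e, of i] that unfolding \<pi>_def by simp
        define y where "y = (\<lambda>i. if i < p + \<rho> then c' i else c i)"
        have cv: "c \<in> vecs n" "c' \<in> vecs n" using c c' C(1) by auto
        have yv: "y \<in> vecs n" using cv unfolding y_def vecs_def by auto
        have "rk K n (\<lambda>i. y i - c i) \<le> card {p..<p + \<rho>}"
        proof (rule rk_supp[OF K])
          fix i assume "i < n" "y i - c i \<noteq> 0"
          then have "i < p + \<rho>" "c' i \<noteq> c i" unfolding y_def by (auto split: if_splits)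
          moreover have "\<not> i < p" using agree[of i] \<open>c' i \<noteq> c i\<close> by auto
          ultimately show "i \<in> {p..<p + \<rho>}" by simp
        qed simp
        then have y1: "y \<in> Bc c" using yv unfolding Bc_def by simp
        have "rk K n (\<lambda>i. y i - c' i) \<le> card {p + \<rho>..<n}"
        proof (rule rk_supp[OF K])
          fix i assume "i < n" "y i - c' i \<noteq> 0"
          then show "i \<in> {p + \<rho>..<n}" unfolding y_def by (auto split: if_splits simp: not_less)
        qed simp
        moreover have "card {p + \<rho>..<n} \<le> \<rho>" unfolding p_def by simp
        ultimately have y2: "y \<in> Bc c'" using yv unfolding Bc_def by simp
        show False using disj c c' ne y1 y2 by blast
      qed
    qed
    have "\<pi> ` C \<subseteq> vecs p" unfolding \<pi>_def vecs_def by auto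
    then have "card (\<pi> ` C) \<le> card (vecs p :: (nat \<Rightarrow> 'a) set)" by (rule card_mono[OF finite_vecs])
    then have cC: "card C \<le> card (UNIV :: 'a set) ^ p" using card_image[OF inj] by (simp add: card_vecs)
    have "card (vecs n :: (nat \<Rightarrow> 'a) set) \<le> (\<Sum>c\<in>C. card (Bc c))"
      by (subst cover) (rule card_UN_le[OF finC])
    also have "\<dots> = card C * card B0" using sumB by simp
    also have "\<dots> \<le> card (UNIV :: 'a set) ^ p * card B0" using cC by (rule mult_right_mono) simp
    also have "\<dots> < card (UNIV :: 'a set) ^ p * card (UNIV :: 'a set) ^ min n (2 * \<rho>)"
    proof (rule mult_strict_left_mono)
      show "card B0 < card (UNIV :: 'a set) ^ min n (2 * \<rho>)"
        unfolding B0_def by (rule ball_lt[OF K q Q nm r0 rn])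
      have "0 < card (UNIV :: 'a set)" by (rule finite_UNIV_card_ge_0) (rule finite_UNIV)
      then show "0 < card (UNIV :: 'a set) ^ p" by simp
    qed
    also have "\<dots> = card (UNIV :: 'a set) ^ n" unfolding p_def by (simp add: power_add[symmetric])
    finally show False by (simp add: card_vecs)
  qed
  then obtain c0 c1 where c0: "c0 \<in> C" and c1: "c1 \<in> C" and ne: "c0 \<noteq> c1" and ov: "Bc c0 \<inter> Bc c1 \<noteq> {}"
    by blast
  define R where "R = (\<Union>c\<in>C - {c0}. Bc c)"
  have finR: "finite R" unfolding R_def by (rule finite_UN_I) (use finC finB in auto)
  have U: "(\<Union>c\<in>C. Bc c) = Bc c0 \<union> R" unfolding R_def using c0 by blast
  have "Bc c0 \<inter> Bc c1 \<subseteq> Bc c0 \<inter> R" unfolding R_def using c1 ne by blast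
  then have I: "Bc c0 \<inter> R \<noteq> {}" using ov by blast
  moreover have "finite (Bc c0 \<inter> R)" using finR by simp
  ultimately have I1: "1 \<le> card (Bc c0 \<inter> R)" by (simp add: Suc_le_eq card_gt_0_iff)
  have cR: "card R \<le> (card C - 1) * card B0"
  proof -
    have "card R \<le> (\<Sum>c\<in>C - {c0}. card (Bc c))" unfolding R_def by (rule card_UN_le) (use finC in simp)
    also have "\<dots> = card (C - {c0}) * card B0" by (rule sumB) blast
    also have "\<dots> = (card C - 1) * card B0" using c0 finC by simp
    finally show ?thesis .
  qed
  have "card (vecs n :: (nat \<Rightarrow> 'a) set) + card (Bc c0 \<inter> R) = card (Bc c0) + card R"
    unfolding cover U using card_Un_Int[OF finB finR] by simp
  then have "card (vecs n :: (nat \<Rightarrow> 'a) set) < card B0 + (card C - 1) * card B0"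
    using I1 cR cB[OF c0] by linarith
  also have "\<dots> = card C * card B0"
  proof -
    have "1 \<le> card C" using C(2) finC by (simp add: Suc_le_eq card_gt_0_iff)
    then show ?thesis by (cases "card C") simp_all
  qed
  finally show ?thesis unfolding B0_def .
qed

theorem proposition6:
  fixes K :: "'a::{field,finite} set" and q m n \<rho> :: nat
  assumes "is_subfield K" and "card K = q" and "card (UNIV :: 'a set) = q ^ m"
    and "n \<le> m" and "0 < \<rho>" and "\<rho> < n"
  shows "\<lfloor>real q ^ (m * n) / ball_vol q m n \<rho>\<rfloor> + 1 \<le> int (K_R K n \<rho>)
         \<and> K_R K n \<rho> \<le> q ^ (m * (n - \<rho>))"
proof -
  note K = assms(1) and q = assms(2) and Q = assms(3) and nm = assms(4) and r0 = assms(5) and rn = assms(6)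
  define M where "M = {card C | C. C \<subseteq> (vecs n :: (nat \<Rightarrow> 'a) set) \<and> C \<noteq> {} \<and> rank_cov_radius K n C = \<rho>}"
  have KR: "K_R K n \<rho> = Inf M" unfolding K_R_def M_def ..
  define C0 where "C0 = {x :: nat \<Rightarrow> 'a. x \<in> vecs n \<and> (\<forall>i<\<rho>. x i = 0)}"
  have C0sub: "C0 \<subseteq> vecs n" unfolding C0_def by blast
  have finC0: "finite C0" by (rule finite_subset[OF C0sub finite_vecs])
  have zC0: "(\<lambda>_. 0) \<in> C0" unfolding C0_def vecs_def by simp
  then have C0ne: "C0 \<noteq> {}" by blast
  have cardC0: "card C0 = q ^ (m * (n - \<rho>))"
  proof -
    define A where "A i = (if i < \<rho> then {0} else (UNIV :: 'a set))" for i
    have "C0 = {x \<in> vecs n. \<forall>i<n. x i \<in> A i}" unfolding C0_def A_def using rn by auto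
    then have "card C0 = (\<Prod>i<n. card (A i))" using card_vecs_restr by simp
    also have "\<dots> = (\<Prod>i<n. if i < \<rho> then 1 else card (UNIV :: 'a set))"
      by (rule prod.cong) (auto simp: A_def)
    also have "\<dots> = card (UNIV :: 'a set) ^ (n - \<rho>)" by (rule prod_if_lt)
    finally show ?thesis using Q by (simp add: power_mult)
  qed
  let ?f = "\<lambda>x. Min (rank_dist K n x ` C0)"
  have fle: "?f x \<le> \<rho>" if x: "x \<in> vecs n" for x
  proof -
    define c where "c = (\<lambda>i. if i < \<rho> then 0 else x i)"
    have c: "c \<in> C0" using x unfolding c_def C0_def vecs_def by auto
    have "rk K n (\<lambda>i. x i - c i) \<le> card {0..<\<rho>}"
      by (rule rk_supp[OF K]) (auto simp: c_def split: if_splits)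
    then have "rank_dist K n x c \<le> \<rho>" unfolding rank_dist_def by simp
    moreover have "?f x \<le> rank_dist K n x c" by (rule Min_le) (use finC0 c in auto)
    ultimately show ?thesis by linarith
  qed
  obtain z :: "nat \<Rightarrow> 'a" where z: "z \<in> vecs \<rho>" "rk K \<rho> z = \<rho>"
    using full_rank_exists[OF K, of m \<rho>] Q q nm rn by auto
  have zv: "z \<in> vecs n" using z(1) rn unfolding vecs_def by auto
  have fz: "?f z = \<rho>"
  proof (rule antisym)
    show "?f z \<le> \<rho>" by (rule fle[OF zv])
    have "\<forall>c\<in>C0. \<rho> \<le> rank_dist K n z c"
    proof
      fix c assume c: "c \<in> C0"
      have "rk K \<rho> (\<lambda>i. z i - c i) = rk K \<rho> z" by (rule rk_cong) (use c in \<open>auto simp: C0_def\<close>)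
      also have "rk K \<rho> (\<lambda>i. z i - c i) \<le> rk K n (\<lambda>i. z i - c i)" by (rule rk_mono_n) (use rn in simp)
      ultimately show "\<rho> \<le> rank_dist K n z c" unfolding rank_dist_def using z(2) by simp
    qed
    then show "\<rho> \<le> ?f z" using finC0 C0ne by simp
  qed
  have radC0: "rank_cov_radius K n C0 = \<rho>"
    unfolding rank_cov_radius_def
  proof (rule Max_eqI)
    show "finite (?f ` vecs n)" by (rule finite_imageI) (rule finite_vecs)
    show "\<And>y. y \<in> ?f ` vecs n \<Longrightarrow> y \<le> \<rho>" using fle by blast
    show "\<rho> \<in> ?f ` vecs n" by (rule image_eqI[where x=z]) (use fz zv in auto)
  qed
  have C0M: "card C0 \<in> M" unfolding M_def using C0sub C0ne radC0 by blast
  have upper: "K_R K n \<rho> \<le> q ^ (m * (n - \<rho>))"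
    unfolding KR cardC0[symmetric] by (rule cInf_lower[OF C0M]) simp
  define k where "k = Inf M"
  have "M \<noteq> {}" using C0M by blast
  then have kM: "k \<in> M" unfolding k_def by (rule Inf_nat_def1)
  then have "\<exists>C. k = card C \<and> C \<subseteq> (vecs n :: (nat \<Rightarrow> 'a) set) \<and> C \<noteq> {} \<and> rank_cov_radius K n C = \<rho>"
    unfolding M_def by (simp only: mem_Collect_eq)
  then obtain C where C: "C \<subseteq> (vecs n :: (nat \<Rightarrow> 'a) set)" "C \<noteq> {}" "rank_cov_radius K n C = \<rho>"
    and cC0: "k = card C" by blast
  have cC: "card C = K_R K n \<rho>" using cC0 KR k_def by simp
  have lt: "card (vecs n :: (nat \<Rightarrow> 'a) set) < card C * card {x :: nat \<Rightarrow> 'a. x \<in> vecs n \<and> rk K n x \<le> \<rho>}"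
    by (rule lower_code[OF K q Q nm r0 rn C])
  define V where "V = ball_vol q m n \<rho>"
  have V: "V = real (card {x :: nat \<Rightarrow> 'a. x \<in> vecs n \<and> rk K n x \<le> \<rho>})"
    unfolding V_def using card_ball0[OF K q Q, of n \<rho>] by simp
  have Vpos: "V > 0"
  proof -
    have "(\<lambda>_. 0) \<in> {x :: nat \<Rightarrow> 'a. x \<in> vecs n \<and> rk K n x \<le> \<rho>}"
      using rk_le[of K 0 "\<lambda>_. 0::'a"] rk_supp[OF K, of "{}" n "\<lambda>_. 0::'a"] by (simp add: vecs_def)
    moreover have "finite {x :: nat \<Rightarrow> 'a. x \<in> vecs n \<and> rk K n x \<le> \<rho>}" by (rule finite_subset[OF _ finite_vecs]) blast
    ultimately have "card {x :: nat \<Rightarrow> 'a. x \<in> vecs n \<and> rk K n x \<le> \<rho>} > 0" by (auto simp: card_gt_0_iff)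
    then show ?thesis unfolding V by simp
  qed
  have "real q ^ (m * n) = real (card (vecs n :: (nat \<Rightarrow> 'a) set))"
    by (simp add: card_vecs Q power_mult)
  also have "\<dots> < real (card C) * V" unfolding V using lt by (simp only: of_nat_mult[symmetric] of_nat_less_iff)
  finally have "real q ^ (m * n) / V < real (K_R K n \<rho>)" using Vpos cC by (simp add: divide_less_eq)
  then have "\<lfloor>real q ^ (m * n) / V\<rfloor> < int (K_R K n \<rho>)" by (simp add: floor_less_iff)
  then have lower: "\<lfloor>real q ^ (m * n) / ball_vol q m n \<rho>\<rfloor> + 1 \<le> int (K_R K n \<rho>)" unfolding V_def by simp
  show ?thesis using lower upper by simp
qed

end
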